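(* Let $X$ be a geodesic space with $r(X)>0$, let $\varepsilon>0$, $0<q\le r(X)/2$, and let $A\subset X$ with $\operatorname{Diam}(A)\le q-2\varepsilon$. Then there exists an open geodesically convex subset $A_\infty\subset X$ containing $A$ with $\operatorname{Diam}(A_\infty)\le q-\varepsilon$.
   Context: A metric space is geodesic if any two points $x,y$ are joined by a path of length $d(x,y)$ (a geodesic; here a geodesic is the image of an isometric embedding of a closed interval). For a geodesic space $X$, $r(X)\ge0$ is the supremum of the real numbers $r$ satisfying: (1) for all $x,y\in X$ with $d(x,y)<2r$ there is a unique shortest geodesic from $x$ to $y$; (2) if $x,y,u\in X$ with $d(x,y)<r$, $d(u,x)<r$, $d(u,y)<r$ and $z$ is a point on the geodesic joining $x$ and $y$, then $d(u,z)\le\max\{d(u,x),d(u,y)\}$; (3) if $\gamma,\gamma'$ are arc-length parameterized geodesics with $\gamma(0)=\gamma'(0)$ and $0\le s,s'<r$, $0\le t<1$, then $d(\gamma(ts),\gamma'(ts'))\le d(\gamma(s),\gamma'(s'))$. A subset $A$ of a ball $B(x_0,r(X))$ is geodesically convex if every (unique shortest) geodesic connecting two points of $A$ lies entirely in $A$. *)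

theory Defs
  imports "HOL-Analysis.Analysis"
begin

text \<open>The geodesic space X is the whole carrier of a type of class metric_space.\<close>

definition isom_on_interval :: "real \<Rightarrow> (real \<Rightarrow> 'a::metric_space) \<Rightarrow> bool" where
  "isom_on_interval L g \<longleftrightarrow> 0 \<le> L \<and>
     (\<forall>a\<in>{0..L}. \<forall>b\<in>{0..L}. dist (g a) (g b) = \<bar>a - b\<bar>)"

definition geodesic_path :: "'a::metric_space \<Rightarrow> 'a \<Rightarrow> (real \<Rightarrow> 'a) \<Rightarrow> bool" where
  "geodesic_path x y g \<longleftrightarrow> isom_on_interval (dist x y) g \<and> g 0 = x \<and> g (dist x y) = y"

definition geodesics :: "'a::metric_space \<Rightarrow> 'a \<Rightarrow> 'a set set" where
  "geodesics x y = {g ` {0..dist x y} | g. geodesic_path x y g}"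

definition geodesic_space :: "'a::metric_space itself \<Rightarrow> bool" where
  "geodesic_space TYPE('a) \<longleftrightarrow> (\<forall>x y::'a. \<exists>g. geodesic_path x y g)"

text \<open>Conditions (1)--(3) for a given r.\<close>
definition r_admissible :: "'a::metric_space itself \<Rightarrow> real \<Rightarrow> bool" where
  "r_admissible TYPE('a) r \<longleftrightarrow>
     (\<forall>x y::'a. dist x y < 2 * r \<longrightarrow> (\<exists>!S. S \<in> geodesics x y)) \<and>
     (\<forall>x y u::'a. dist x y < r \<and> dist u x < r \<and> dist u y < r \<longrightarrow>
        (\<forall>z\<in>\<Union>(geodesics x y). dist u z \<le> max (dist u x) (dist u y))) \<and>
     (\<forall>(g::real \<Rightarrow> 'a) g' L L' s s' t. isom_on_interval L g \<and> isom_on_interval L' g' \<and>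
        g 0 = g' 0 \<and> s \<in> {0..L} \<and> s' \<in> {0..L'} \<and> s < r \<and> s' < r \<and> 0 \<le> t \<and> t < 1 \<longrightarrow>
        dist (g (t * s)) (g' (t * s')) \<le> dist (g s) (g' s'))"

text \<open>r(X), as an extended real (it may be infinite).\<close>
definition rX :: "'a::metric_space itself \<Rightarrow> ereal" where
  "rX TYPE('a) = Sup (ereal ` {r. 0 \<le> r \<and> r_admissible TYPE('a) r})"

definition geod_convex :: "'a::metric_space set \<Rightarrow> bool" where
  "geod_convex A \<longleftrightarrow> (\<exists>x0::'a. \<forall>x\<in>A. ereal (dist x0 x) < rX TYPE('a)) \<and>
     (\<forall>x\<in>A. \<forall>y\<in>A. \<forall>S\<in>geodesics x y. S \<subseteq> A)"

end

theory Submission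
  imports Defs
begin

definition ghull :: "'a::metric_space set \<Rightarrow> 'a set" where
  "ghull S = S \<union> (\<Union>x\<in>S. \<Union>y\<in>S. \<Union>(geodesics x y))"

definition nbhd :: "real \<Rightarrow> 'a::metric_space set \<Rightarrow> 'a set" where
  "nbhd d S = (\<Union>s\<in>S. ball s d)"

primrec gseq :: "'a::metric_space set \<Rightarrow> real \<Rightarrow> nat \<Rightarrow> 'a set" where
  "gseq A e 0 = A"
| "gseq A e (Suc n) = nbhd (e / 2^(n+2)) (ghull (gseq A e n))"

lemma ghull_bound:
  fixes S :: "'a::metric_space set"
  assumes adm: "r_admissible TYPE('a) r"
    and B: "\<And>x y. x \<in> S \<Longrightarrow> y \<in> S \<Longrightarrow> dist x y \<le> D" and Dr: "D < r"
  shows "\<And>x y. x \<in> ghull S \<Longrightarrow> y \<in> ghull S \<Longrightarrow> dist x y \<le> D"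
proof -
  have c2: "\<And>(x::'a) y u z. dist x y < r \<Longrightarrow> dist u x < r \<Longrightarrow> dist u y < r \<Longrightarrow>
      z \<in> \<Union>(geodesics x y) \<Longrightarrow> dist u z \<le> max (dist u x) (dist u y)"
    using adm[unfolded r_admissible_def, THEN conjunct2, THEN conjunct1] by blast
  have step1: "dist u z \<le> D" if u: "u \<in> S" and z: "z \<in> ghull S" for u z
  proof (cases "z \<in> S")
    case True then show ?thesis using B u by blast
  next
    case False
    then obtain x y where xy: "x \<in> S" "y \<in> S" "z \<in> \<Union>(geodesics x y)"
      using z unfolding ghull_def by blast
    have "dist u z \<le> max (dist u x) (dist u y)"
      using c2[OF _ _ _ xy(3)] B xy u Dr by (meson le_less_trans)
    then show ?thesis using B[OF u xy(1)] B[OF u xy(2)] by (meson max.boundedI order_trans)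
  qed
  fix x y assume x: "x \<in> ghull S" and y: "y \<in> ghull S"
  show "dist x y \<le> D"
  proof (cases "x \<in> S")
    case True then show ?thesis using step1 y by blast
  next
    case False
    then obtain a b where ab: "a \<in> S" "b \<in> S" "x \<in> \<Union>(geodesics a b)"
      using x unfolding ghull_def by blast
    have "dist y x \<le> max (dist y a) (dist y b)"
      using c2[OF _ _ _ ab(3)] B ab step1[of a y] step1[of b y] y Dr
      by (metis dist_commute le_less_trans)
    then show ?thesis using step1[of a y] step1[of b y] ab y
      by (simp add: dist_commute)
  qed
qed

lemma nbhd_bound:
  fixes S :: "'a::metric_space set"
  assumes B: "\<And>x y. x \<in> S \<Longrightarrow> y \<in> S \<Longrightarrow> dist x y \<le> D"
  shows "\<And>x y. x \<in> nbhd d S \<Longrightarrow> y \<in> nbhd d S \<Longrightarrow> dist x y \<le> D + 2 * d"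
proof -
  fix x y assume "x \<in> nbhd d S" "y \<in> nbhd d S"
  then obtain a b where ab: "a \<in> S" "b \<in> S" "dist a x < d" "dist b y < d"
    unfolding nbhd_def by auto
  have "dist x y \<le> dist x a + dist a b + dist b y"
    by (metis add_mono_thms_linordered_semiring(3) dist_triangle order_trans)
  then show "dist x y \<le> D + 2 * d" using ab B[of a b] by (simp add: dist_commute)
qed

lemma gseq_bound:
  fixes A :: "'a::metric_space set"
  assumes adm: "r_admissible TYPE('a) r" and e: "e > 0"
    and B: "\<And>x y. x \<in> A \<Longrightarrow> y \<in> A \<Longrightarrow> dist x y \<le> d0" and Dr: "d0 + e < r"
  shows "\<And>x y. x \<in> gseq A e n \<Longrightarrow> y \<in> gseq A e n \<Longrightarrow> dist x y \<le> d0 + e * (1 - 1/2^n)"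
proof (induction n)
  case 0 then show ?case using B by simp
next
  case (Suc n)
  have lt: "d0 + e * (1 - 1/2^n) < r"
  proof -
    have "e * (1 - 1/2^n) \<le> e" using e by (simp add: mult_le_cancel_left1)
    then show ?thesis using Dr by linarith
  qed
  have h: "\<And>x y. x \<in> ghull (gseq A e n) \<Longrightarrow> y \<in> ghull (gseq A e n) \<Longrightarrow>
      dist x y \<le> d0 + e * (1 - 1/2^n)"
    using ghull_bound[OF adm _ lt] Suc.IH by blast
  have bd: "dist x y \<le> d0 + e * (1 - 1/2^n) + 2 * (e / 2^(n+2))"
    if "x \<in> gseq A e (Suc n)" "y \<in> gseq A e (Suc n)" for x y
  proof -
    have "x \<in> nbhd (e / 2^(n+2)) (ghull (gseq A e n))" "y \<in> nbhd (e / 2^(n+2)) (ghull (gseq A e n))"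
      using that by simp_all
    then show ?thesis
      using nbhd_bound[where S="ghull (gseq A e n)" and D="d0 + e * (1 - 1/2^n)" and d="e / 2^(n+2)"] h
      by blast
  qed
  have eq: "d0 + e * (1 - 1/2^n) + 2 * (e / 2^(n+2)) = d0 + e * (1 - 1/2^Suc n)"
    by (simp add: field_simps)
  show ?case using bd[OF Suc.prems] eq by linarith
qed

lemma ghull_next:
  assumes "e > 0" shows "ghull (gseq A e n) \<subseteq> gseq A e (Suc n)"
proof
  fix x assume "x \<in> ghull (gseq A e n)"
  moreover have "x \<in> ball x (e / 2^(n+2))" using assms by simp
  ultimately have "x \<in> nbhd (e / 2^(n+2)) (ghull (gseq A e n))" unfolding nbhd_def by (rule UN_I)
  then show "x \<in> gseq A e (Suc n)" by simp
qed

lemma gseq_mono: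
  assumes "e > 0" shows "gseq A e n \<subseteq> gseq A e (Suc n)"
proof
  fix x assume "x \<in> gseq A e n"
  then have "x \<in> ghull (gseq A e n)" unfolding ghull_def by simp
  moreover have "x \<in> ball x (e / 2^(n+2))" using assms by simp
  ultimately have "x \<in> nbhd (e / 2^(n+2)) (ghull (gseq A e n))" unfolding nbhd_def by (rule UN_I)
  then show "x \<in> gseq A e (Suc n)" by simp
qed

theorem mainTheorem4:
  fixes A :: "'a::metric_space set" and \<epsilon> q :: real
  assumes "geodesic_space TYPE('a)"
    and "rX TYPE('a) > 0"
    and "\<epsilon> > 0" and "q > 0" and "ereal q \<le> rX TYPE('a) / 2"
    and "bounded A" and "diameter A \<le> q - 2 * \<epsilon>"
  shows "\<exists>A_inf. open A_inf \<and> geod_convex A_inf \<and> A \<subseteq> A_inf \<and>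
           bounded A_inf \<and> diameter A_inf \<le> q - \<epsilon>"
proof -
  note e = assms(3)
  have "ereal (q - \<epsilon>) < rX TYPE('a)"
  proof -
    have "ereal (q - \<epsilon>) < ereal q" using e by simp
    also have "ereal q \<le> rX TYPE('a) / 2" by fact
    also have "rX TYPE('a) / 2 \<le> rX TYPE('a)"
      using assms(2) by (cases "rX TYPE('a)") auto
    finally show ?thesis .
  qed
  then have "\<exists>y\<in>ereal ` {r. 0 \<le> r \<and> r_admissible TYPE('a) r}. ereal (q - \<epsilon>) < y"
    unfolding rX_def using less_Sup_iff by blast
  then obtain r where r: "0 \<le> r" "r_admissible TYPE('a) r" "q - \<epsilon> < r"
    by auto
  define d0 where "d0 = diameter A"
  have B: "\<And>x y. x \<in> A \<Longrightarrow> y \<in> A \<Longrightarrow> dist x y \<le> d0"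
    using diameter_bounded_bound[OF assms(6)] d0_def by blast
  have Dr: "d0 + \<epsilon> < r" using assms(7) r(3) d0_def by simp
  define Ai where "Ai = (\<Union>n. gseq A \<epsilon> n)"
  have mono: "\<And>m n. m \<le> n \<Longrightarrow> gseq A \<epsilon> m \<subseteq> gseq A \<epsilon> n"
    using lift_Suc_mono_le[of "gseq A \<epsilon>"] gseq_mono[OF e, of A] by blast
  have pb: "dist x y \<le> q - \<epsilon>" if xy: "x \<in> Ai" "y \<in> Ai" for x y
  proof -
    obtain m n where "x \<in> gseq A \<epsilon> m" "y \<in> gseq A \<epsilon> n" using xy unfolding Ai_def by blast
    then have "x \<in> gseq A \<epsilon> (max m n)" "y \<in> gseq A \<epsilon> (max m n)"
      using mono by (meson max.cobounded1 max.cobounded2 subsetD)+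
    then have "dist x y \<le> d0 + \<epsilon> * (1 - 1/2^(max m n))"
      using gseq_bound[OF r(2) e B Dr] by blast
    also have "\<dots> \<le> d0 + \<epsilon>" using e by (simp add: mult_le_cancel_left1)
    finally show ?thesis using assms(7) d0_def by simp
  qed
  have "open Ai"
  proof -
    have "Ai = (\<Union>n. gseq A \<epsilon> (Suc n))"
      unfolding Ai_def using gseq_mono[OF e, of A] by blast
    moreover have "open (gseq A \<epsilon> (Suc n))" for n
      by (simp add: nbhd_def open_UN)
    ultimately show ?thesis by auto
  qed
  moreover have "geod_convex Ai"
    unfolding geod_convex_def
  proof
    show "\<exists>x0::'a. \<forall>x\<in>Ai. ereal (dist x0 x) < rX TYPE('a)"
    proof (cases "Ai = {}")
      case True then show ?thesis by auto
    next
      case False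
      then obtain x0 where x0: "x0 \<in> Ai" by auto
      have "\<forall>x\<in>Ai. ereal (dist x0 x) < rX TYPE('a)"
      proof
        fix x assume "x \<in> Ai"
        then have "ereal (dist x0 x) \<le> ereal (q - \<epsilon>)" using pb x0 by simp
        then show "ereal (dist x0 x) < rX TYPE('a)" using \<open>ereal (q - \<epsilon>) < rX TYPE('a)\<close> by (meson le_less_trans)
      qed
      then show ?thesis by blast
    qed
    show "\<forall>x\<in>Ai. \<forall>y\<in>Ai. \<forall>S\<in>geodesics x y. S \<subseteq> Ai"
    proof (intro ballI)
      fix x y S assume x: "x \<in> Ai" and y: "y \<in> Ai" and S: "S \<in> geodesics x y"
      obtain m n where "x \<in> gseq A \<epsilon> m" "y \<in> gseq A \<epsilon> n" using x y unfolding Ai_def by blast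
      then have "x \<in> gseq A \<epsilon> (max m n)" "y \<in> gseq A \<epsilon> (max m n)"
        using mono by (meson max.cobounded1 max.cobounded2 subsetD)+
      then have "S \<subseteq> ghull (gseq A \<epsilon> (max m n))" using S unfolding ghull_def by blast
      also have "\<dots> \<subseteq> gseq A \<epsilon> (Suc (max m n))"
        using ghull_next[OF e] by blast
      finally show "S \<subseteq> Ai" unfolding Ai_def by blast
    qed
  qed
  moreover have "A \<subseteq> Ai" unfolding Ai_def by (metis UNIV_I UN_upper gseq.simps(1))
  moreover have "bounded Ai"
  proof (cases "Ai = {}")
    case True then show ?thesis by simp
  next
    case False
    then obtain x0 where "x0 \<in> Ai" by auto
    then show ?thesis unfolding bounded_def using pb by blast
  qed
  moreover have "diameter Ai \<le> q - \<epsilon>"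
  proof (cases "Ai = {}")
    case True then show ?thesis using assms(7) diameter_ge_0[OF assms(6)] e by simp
  next
    case False
    then show ?thesis unfolding diameter_def using pb
      by (auto intro!: cSUP_least)
  qed
  ultimately show ?thesis by blast
qed

end
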